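(* Let $\mathcal{T}$ be a tower with $\mathbb{K}_0=\emptyset$ whose maps are elementary inclusions or elementary contractions (named by the naming convention below), let $\hat{\mathbb{K}}_0,\dots,\hat{\mathbb{K}}_m$ be its active small coning construction and $\mathcal{W}$ its contracting forest. Let $x$ be an internal node of $\mathcal{W}$ with children $y_1,y_2$. Then $c(x)\le 2\cdot|E(y_1)\setminus E(y_2)|$.
   Context: Elementary inclusion: $\mathbb{K}_{i+1}=\mathbb{K}_i\cup\{\sigma\}$, $\sigma\notin\mathbb{K}_i$. Elementary contraction of distinct vertices $u,v$: for one of them, say $v$, the vertex set of $\mathbb{K}_{i+1}$ is that of $\mathbb{K}_i$ minus $v$, $\phi_i(u)=\phi_i(v)=u$, identity elsewhere, $\mathbb{K}_{i+1}=\phi_i(\mathbb{K}_i)$. Active small coning construction: $\hat{\mathbb{K}}_0=\emptyset$; vertices flagged active/inactive, simplex active iff all its vertices are; $\mathrm{Act}\overline{\mathrm{St}}(w,\hat{\mathbb{K}}_i)$ = active simplices of $\hat{\mathbb{K}}_i$ in the closed star of $w$. Inclusion of $\sigma$: add $\sigma$ (new vertex active). Contraction of $u,v$: if $|\mathrm{Act}\overline{\mathrm{St}}(u,\hat{\mathbb{K}}_i)|\le|\mathrm{Act}\overline{\mathrm{St}}(v,\hat{\mathbb{K}}_i)|$, $\hat{\mathbb{K}}_{i+1}=\hat{\mathbb{K}}_i\cup\{\{v\}\cup\tau:\tau\in\mathrm{Act}\overline{\mathrm{St}}(u,\hat{\mathbb{K}}_i)\}$ and $u$ is marked inactive; otherwise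 symmetric. Naming convention: each contraction maps $u,v$ to the vertex not marked inactive. Contracting forest: $\mathcal{W}_0=\emptyset$; inclusion of a simplex of positive dimension leaves the forest unchanged; inclusion of a vertex $w$ adds a single-node tree labeled $w$; a contraction of $u,v$ makes the roots labeled $u$ and $v$ the two children of a new root labeled with the image vertex; $\mathcal{W}=\mathcal{W}_m$. Each internal node $x$ corresponds to one contraction $\phi_i$, and its cost is $c(x)=|\hat{\mathbb{K}}_{i+1}\setminus\hat{\mathbb{K}}_i|$; leaves have cost $0$. Let $\Sigma$ be the collection of simplices added at elementary inclusions; for $\sigma\in\Sigma$ added by $\phi_i$, each vertex of $\sigma$ labels a root of $\mathcal{W}_{i+1}$, i.e., corresponds to a node of $\mathcal{W}$; $E(x)$ is the set of $\sigma\in\Sigma$ with at least one vertex whose node lies in the subtree rooted at $x$. *)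

theory Defs
  imports Main
begin

text \<open>Simplices are finite nonempty vertex sets; a complex is a set of simplices.
  A tower starting at the empty complex is encoded by the list of its elementary maps.\<close>

datatype 'v tower_op = Incl "'v set" | Contr 'v 'v

text \<open>State after i maps: (K_i, hat K_i, set of active vertices).\<close>
type_synonym 'v tstate = "'v set set \<times> 'v set set \<times> 'v set"

definition act_star :: "'v set set \<Rightarrow> 'v set \<Rightarrow> 'v \<Rightarrow> 'v set set" where
  "act_star Kh A w = {\<tau> \<in> Kh. \<tau> \<subseteq> A \<and> (\<exists>\<sigma>\<in>Kh. w \<in> \<sigma> \<and> \<tau> \<subseteq> \<sigma>)}"

definition survivor :: "'v set set \<Rightarrow> 'v set \<Rightarrow> 'v \<Rightarrow> 'v \<Rightarrow> 'v" where
  "survivor Kh A u v = (if card (act_star Kh A u) \<le> card (act_star Kh A v) then v else u)"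

fun step :: "'v tower_op \<Rightarrow> 'v tstate \<Rightarrow> 'v tstate" where
  "step (Incl \<sigma>) (K, Kh, A) =
     (insert \<sigma> K, insert \<sigma> Kh, if card \<sigma> = 1 then A \<union> \<sigma> else A)"
| "step (Contr u v) (K, Kh, A) =
     (let s = survivor Kh A u v; d = (if s = v then u else v);
          \<phi> = (\<lambda>x. if x = d then s else x)
      in ((\<lambda>\<sigma>. \<phi> ` \<sigma>) ` K, Kh \<union> {insert s \<tau> | \<tau>. \<tau> \<in> act_star Kh A d}, A - {d}))"

definition tstate :: "'v tower_op list \<Rightarrow> nat \<Rightarrow> 'v tstate" where
  "tstate ops i = fold step (take i ops) ({}, {}, {})"

definition cK :: "'v tower_op list \<Rightarrow> nat \<Rightarrow> 'v set set" where
  "cK ops i = fst (tstate ops i)"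
definition cKhat :: "'v tower_op list \<Rightarrow> nat \<Rightarrow> 'v set set" where
  "cKhat ops i = fst (snd (tstate ops i))"
definition cAct :: "'v tower_op list \<Rightarrow> nat \<Rightarrow> 'v set" where
  "cAct ops i = snd (snd (tstate ops i))"

text \<open>Validity: every map is an elementary inclusion (of a simplex not yet present whose
  proper faces are present, so that K_{i+1} is a complex; new vertices get fresh names)
  or an elementary contraction of two distinct vertices of K_i.\<close>
definition valid_tower :: "'v tower_op list \<Rightarrow> bool" where
  "valid_tower ops \<longleftrightarrow> (\<forall>i<length ops. case ops ! i of
      Incl \<sigma> \<Rightarrow> finite \<sigma> \<and> \<sigma> \<noteq> {} \<and> \<sigma> \<notin> cK ops i
                 \<and> (\<forall>\<tau>. \<tau> \<subseteq> \<sigma> \<and> \<tau> \<noteq> {} \<and> \<tau> \<noteq> \<sigma> \<longrightarrow> \<tau> \<in> cK ops i)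
                 \<and> (\<forall>w. \<sigma> = {w} \<longrightarrow> w \<notin> \<Union> (cKhat ops i))
    | Contr u v \<Rightarrow> u \<noteq> v \<and> {u} \<in> cK ops i \<and> {v} \<in> cK ops i)"

text \<open>Contracting forest: nodes are identified with the index of the map creating them
  (vertex inclusions give leaves, contractions give internal nodes).\<close>
definition is_node :: "'v tower_op list \<Rightarrow> nat \<Rightarrow> bool" where
  "is_node ops j \<longleftrightarrow> j < length ops \<and>
     ((\<exists>w. ops ! j = Incl {w}) \<or> (\<exists>u v. ops ! j = Contr u v))"

definition node_label :: "'v tower_op list \<Rightarrow> nat \<Rightarrow> 'v" where
  "node_label ops j = (case ops ! j of
      Incl \<sigma> \<Rightarrow> the_elem \<sigma>
    | Contr u v \<Rightarrow> survivor (cKhat ops j) (cAct ops j) u v)"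

definition root_of :: "'v tower_op list \<Rightarrow> nat \<Rightarrow> 'v \<Rightarrow> nat" where
  "root_of ops i w = (GREATEST j. j < i \<and> is_node ops j \<and> node_label ops j = w)"

inductive in_subtree :: "'v tower_op list \<Rightarrow> nat \<Rightarrow> nat \<Rightarrow> bool" for ops where
  refl: "in_subtree ops x x"
| left: "x < length ops \<Longrightarrow> ops ! x = Contr u v \<Longrightarrow> in_subtree ops (root_of ops x u) y
          \<Longrightarrow> in_subtree ops x y"
| right: "x < length ops \<Longrightarrow> ops ! x = Contr u v \<Longrightarrow> in_subtree ops (root_of ops x v) y
          \<Longrightarrow> in_subtree ops x y"

text \<open>E(x), with the elements of Sigma indexed by the step at which they are included.\<close>
definition E_set :: "'v tower_op list \<Rightarrow> nat \<Rightarrow> nat set" where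
  "E_set ops x = {i. i < length ops \<and>
     (\<exists>\<sigma>. ops ! i = Incl \<sigma> \<and> (\<exists>a\<in>\<sigma>. in_subtree ops x (root_of ops (Suc i) a)))}"

definition cost :: "'v tower_op list \<Rightarrow> nat \<Rightarrow> nat" where
  "cost ops x = card (cKhat ops (Suc x) - cKhat ops x)"

end

theory Submission
  imports Defs
begin

lemma tstate_Suc: "i < length ops \<Longrightarrow> tstate ops (Suc i) = step (ops!i) (tstate ops i)"
  by (simp add: tstate_def take_Suc_conv_app_nth)

definition surv :: "'v tower_op list \<Rightarrow> nat \<Rightarrow> 'v \<Rightarrow> 'v \<Rightarrow> 'v" where
  "surv ops i u v = survivor (cKhat ops i) (cAct ops i) u v"
definition dead :: "'v tower_op list \<Rightarrow> nat \<Rightarrow> 'v \<Rightarrow> 'v \<Rightarrow> 'v" where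
  "dead ops i u v = (if surv ops i u v = v then u else v)"
definition phi_at :: "'v tower_op list \<Rightarrow> nat \<Rightarrow> 'v \<Rightarrow> 'v" where
  "phi_at ops i = (case ops!i of Contr u v \<Rightarrow> (\<lambda>z. if z = dead ops i u v then surv ops i u v else z)
                   | Incl _ \<Rightarrow> id)"

lemma step_Incl:
  assumes "i < length ops" "ops!i = Incl \<sigma>"
  shows "cK ops (Suc i) = insert \<sigma> (cK ops i)"
    "cKhat ops (Suc i) = insert \<sigma> (cKhat ops i)"
    "cAct ops (Suc i) = (if card \<sigma> = 1 then cAct ops i \<union> \<sigma> else cAct ops i)"
    "phi_at ops i = id"
proof -
  obtain K Kh A where t: "tstate ops i = (K, Kh, A)" by (cases "tstate ops i") auto
  show "cK ops (Suc i) = insert \<sigma> (cK ops i)"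
    "cKhat ops (Suc i) = insert \<sigma> (cKhat ops i)"
    "cAct ops (Suc i) = (if card \<sigma> = 1 then cAct ops i \<union> \<sigma> else cAct ops i)"
    using assms t by (simp_all add: cK_def cKhat_def cAct_def tstate_Suc)
  show "phi_at ops i = id" using assms by (simp add: phi_at_def)
qed

lemma step_Contr:
  assumes "i < length ops" "ops!i = Contr u v"
  shows "cK ops (Suc i) = (\<lambda>\<sigma>. phi_at ops i ` \<sigma>) ` cK ops i"
    "cKhat ops (Suc i) = cKhat ops i \<union> {insert (surv ops i u v) \<tau> |\<tau>. \<tau> \<in> act_star (cKhat ops i) (cAct ops i) (dead ops i u v)}"
    "cAct ops (Suc i) = cAct ops i - {dead ops i u v}"
    "phi_at ops i = (\<lambda>z. if z = dead ops i u v then surv ops i u v else z)"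
proof -
  obtain K Kh A where t: "tstate ops i = (K, Kh, A)" by (cases "tstate ops i") auto
  show "cK ops (Suc i) = (\<lambda>\<sigma>. phi_at ops i ` \<sigma>) ` cK ops i"
    "cKhat ops (Suc i) = cKhat ops i \<union> {insert (surv ops i u v) \<tau> |\<tau>. \<tau> \<in> act_star (cKhat ops i) (cAct ops i) (dead ops i u v)}"
    "cAct ops (Suc i) = cAct ops i - {dead ops i u v}"
    using assms t by (simp_all add: cK_def cKhat_def cAct_def tstate_Suc surv_def dead_def phi_at_def Let_def)
  show "phi_at ops i = (\<lambda>z. if z = dead ops i u v then surv ops i u v else z)"
    using assms by (simp add: phi_at_def)
qed

lemma surv_dead:
  "surv ops i u v \<in> {u, v}" "dead ops i u v \<in> {u, v}"
  "u \<noteq> v \<Longrightarrow> surv ops i u v \<noteq> dead ops i u v"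
  "u \<noteq> v \<Longrightarrow> {surv ops i u v, dead ops i u v} = {u, v}"
  by (auto simp: surv_def dead_def survivor_def)

definition tinv :: "'v tower_op list \<Rightarrow> nat \<Rightarrow> bool" where
  "tinv ops i \<longleftrightarrow> finite (cKhat ops i) \<and> (\<forall>\<rho>\<in>cKhat ops i. finite \<rho> \<and> \<rho> \<noteq> {})
     \<and> cK ops i = {\<rho>\<in>cKhat ops i. \<rho> \<subseteq> cAct ops i}
     \<and> (\<forall>\<rho>\<in>cKhat ops i. \<forall>\<tau>. \<tau> \<subseteq> \<rho> \<longrightarrow> \<tau> \<noteq> {} \<longrightarrow> \<tau> \<in> cKhat ops i)
     \<and> (\<forall>a\<in>cAct ops i. {a} \<in> cKhat ops i)"

lemma tinvI:
  assumes "finite (cKhat ops i)" "\<forall>\<rho>\<in>cKhat ops i. finite \<rho> \<and> \<rho> \<noteq> {}"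
     "cK ops i = {\<rho>\<in>cKhat ops i. \<rho> \<subseteq> cAct ops i}"
     "\<forall>\<rho>\<in>cKhat ops i. \<forall>\<tau>. \<tau> \<subseteq> \<rho> \<longrightarrow> \<tau> \<noteq> {} \<longrightarrow> \<tau> \<in> cKhat ops i"
     "\<forall>a\<in>cAct ops i. {a} \<in> cKhat ops i"
  shows "tinv ops i"
  using assms unfolding tinv_def by (intro conjI)

lemma valid_Incl:
  assumes "valid_tower ops" "i < length ops" "ops!i = Incl \<sigma>"
  shows "finite \<sigma> \<and> \<sigma> \<noteq> {} \<and> \<sigma> \<notin> cK ops i
                 \<and> (\<forall>\<tau>. \<tau> \<subseteq> \<sigma> \<and> \<tau> \<noteq> {} \<and> \<tau> \<noteq> \<sigma> \<longrightarrow> \<tau> \<in> cK ops i)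
                 \<and> (\<forall>w. \<sigma> = {w} \<longrightarrow> w \<notin> \<Union> (cKhat ops i))"
using assms(1)[unfolded valid_tower_def, rule_format, OF assms(2)] assms(3) by simp

lemma valid_Contr:
  assumes "valid_tower ops" "i < length ops" "ops!i = Contr u v"
  shows "u \<noteq> v \<and> {u} \<in> cK ops i \<and> {v} \<in> cK ops i"
using assms(1)[unfolded valid_tower_def, rule_format, OF assms(2)] assms(3) by simp

lemma inv0: "tinv ops 0"
  by (simp add: tinv_def cK_def cKhat_def cAct_def tstate_def)

definition good :: "'v set set \<Rightarrow> 'v set set \<Rightarrow> 'v set \<Rightarrow> bool" where
  "good K Kh A \<longleftrightarrow> finite Kh \<and> (\<forall>\<rho>\<in>Kh. finite \<rho> \<and> \<rho> \<noteq> {})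
     \<and> K = {\<rho>\<in>Kh. \<rho> \<subseteq> A}
     \<and> (\<forall>\<rho>\<in>Kh. \<forall>\<tau>. \<tau> \<subseteq> \<rho> \<longrightarrow> \<tau> \<noteq> {} \<longrightarrow> \<tau> \<in> Kh)
     \<and> (\<forall>a\<in>A. {a} \<in> Kh)"

lemma tinv_good: "tinv ops i \<longleftrightarrow> good (cK ops i) (cKhat ops i) (cAct ops i)"
  by (simp add: tinv_def good_def)

lemma goodD:
  assumes "good K Kh A"
  shows "finite Kh" "\<And>\<rho>. \<rho>\<in>Kh \<Longrightarrow> finite \<rho>" "\<And>\<rho>. \<rho>\<in>Kh \<Longrightarrow> \<rho> \<noteq> {}"
    "K = {\<rho>\<in>Kh. \<rho> \<subseteq> A}"
    "\<And>\<rho> \<tau>. \<rho>\<in>Kh \<Longrightarrow> \<tau> \<subseteq> \<rho> \<Longrightarrow> \<tau> \<noteq> {} \<Longrightarrow> \<tau> \<in> Kh"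
    "\<And>a. a\<in>A \<Longrightarrow> {a} \<in> Kh"
  using assms unfolding good_def by blast+

lemma good_incl:
  assumes G: "good K Kh A" and fs: "finite \<sigma>" "\<sigma> \<noteq> {}"
    and faces: "\<forall>\<tau>. \<tau> \<subseteq> \<sigma> \<and> \<tau> \<noteq> {} \<and> \<tau> \<noteq> \<sigma> \<longrightarrow> \<tau> \<in> K"
    and fresh: "\<forall>w. \<sigma> = {w} \<longrightarrow> w \<notin> \<Union> Kh"
  shows "good (insert \<sigma> K) (insert \<sigma> Kh) (if card \<sigma> = 1 then A \<union> \<sigma> else A)"
proof -
  note g = goodD[OF G]
  have KE': "insert \<sigma> K = {\<rho>\<in>insert \<sigma> Kh. \<rho> \<subseteq> (if card \<sigma> = 1 then A \<union> \<sigma> else A)}"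
  proof (cases "card \<sigma> = 1")
    case True
    then obtain w where w: "\<sigma> = {w}" by (auto simp: card_Suc_eq)
    have nw: "\<And>\<rho>. \<rho> \<in> Kh \<Longrightarrow> w \<notin> \<rho>" using fresh w by auto
    show ?thesis
    proof (rule set_eqI)
      fix \<rho>
      show "\<rho> \<in> insert \<sigma> K \<longleftrightarrow> \<rho> \<in> {\<rho>\<in>insert \<sigma> Kh. \<rho> \<subseteq> (if card \<sigma> = 1 then A \<union> \<sigma> else A)}"
      proof (cases "\<rho> = \<sigma>")
        case True then show ?thesis using `card \<sigma> = 1` by simp
      next
        case False
        have "\<rho> \<in> Kh \<Longrightarrow> \<rho> \<subseteq> A \<union> \<sigma> \<Longrightarrow> \<rho> \<subseteq> A" using nw w by blast
        then show ?thesis using False `card \<sigma> = 1` g(4) by auto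
      qed
    qed
  next
    case False
    have "\<sigma> \<subseteq> A"
    proof
      fix a assume a: "a \<in> \<sigma>"
      have "{a} \<noteq> \<sigma>" using False by auto
      then have "{a} \<in> K" using faces a by auto
      then show "a \<in> A" using g(4) by auto
    qed
    then show ?thesis using False g(4) by auto
  qed
  have cl': "\<forall>\<rho>\<in>insert \<sigma> Kh. \<forall>\<tau>. \<tau> \<subseteq> \<rho> \<longrightarrow> \<tau> \<noteq> {} \<longrightarrow> \<tau> \<in> insert \<sigma> Kh"
  proof (intro ballI allI impI)
    fix \<rho> \<tau> assume r: "\<rho> \<in> insert \<sigma> Kh" and t: "\<tau> \<subseteq> \<rho>" "\<tau> \<noteq> {}"
    show "\<tau> \<in> insert \<sigma> Kh"
    proof (cases "\<rho> = \<sigma>")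
      case True
      show ?thesis
      proof (cases "\<tau> = \<sigma>")
        case False
        then have "\<tau> \<in> K" using faces t True by blast
        then show ?thesis using g(4) by auto
      qed simp
    next
      case False
      then show ?thesis using r t g(5) by blast
    qed
  qed
  have sA': "\<forall>a\<in>(if card \<sigma> = 1 then A \<union> \<sigma> else A). {a} \<in> insert \<sigma> Kh"
  proof
    fix a assume a: "a \<in> (if card \<sigma> = 1 then A \<union> \<sigma> else A)"
    show "{a} \<in> insert \<sigma> Kh"
    proof (cases "card \<sigma> = 1")
      case True
      then obtain w where w: "\<sigma> = {w}" by (auto simp: card_Suc_eq)
      then show ?thesis using a True g(6) by auto
    next
      case False then show ?thesis using a g(6) by auto
    qed
  qed
  show ?thesis unfolding good_def
    using g(1,2,3) fs KE' cl' sA' by auto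
qed

lemma good_contr:
  assumes G: "good K Kh A" and sd: "s \<noteq> d" "s \<in> A" "d \<in> A"
  shows "good ((\<lambda>\<sigma>. (\<lambda>z. if z = d then s else z) ` \<sigma>) ` K)
               (Kh \<union> {insert s \<tau> |\<tau>. \<tau> \<in> act_star Kh A d}) (A - {d})"
proof -
  note g = goodD[OF G]
  define C where "C = {insert s \<tau> |\<tau>. \<tau> \<in> act_star Kh A d}"
  have ast: "\<And>\<tau>. \<tau> \<in> act_star Kh A d \<longleftrightarrow> \<tau> \<in> Kh \<and> \<tau> \<subseteq> A \<and> (\<exists>\<sigma>\<in>Kh. d \<in> \<sigma> \<and> \<tau> \<subseteq> \<sigma>)"
    by (simp add: act_star_def)
  have fC: "finite C"
  proof -
    have "C = insert s ` act_star Kh A d" unfolding C_def by auto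
    moreover have "act_star Kh A d \<subseteq> Kh" by (auto simp: act_star_def)
    ultimately show ?thesis using g(1) finite_subset by auto
  qed
  have elC: "\<forall>\<rho>\<in>C. finite \<rho> \<and> \<rho> \<noteq> {}" unfolding C_def using g(2) by (auto simp: ast)
  have clC: "\<forall>\<rho>\<in>Kh \<union> C. \<forall>\<tau>. \<tau> \<subseteq> \<rho> \<longrightarrow> \<tau> \<noteq> {} \<longrightarrow> \<tau> \<in> Kh \<union> C"
  proof (intro ballI allI impI)
    fix \<rho> \<zeta> assume \<rho>: "\<rho> \<in> Kh \<union> C" and z: "\<zeta> \<subseteq> \<rho>" "\<zeta> \<noteq> {}"
    show "\<zeta> \<in> Kh \<union> C"
    proof (cases "\<rho> \<in> Kh")
      case True then show ?thesis using g(5) z by blast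
    next
      case False
      then have "\<rho> \<in> C" using \<rho> by blast
      then obtain \<tau> where \<tau>: "\<rho> = insert s \<tau>" "\<tau> \<in> Kh" "\<tau> \<subseteq> A" and \<sigma>: "\<exists>\<sigma>\<in>Kh. d \<in> \<sigma> \<and> \<tau> \<subseteq> \<sigma>"
        unfolding C_def by (auto simp: ast)
      show ?thesis
      proof (cases "s \<in> \<zeta>")
        case False
        then have "\<zeta> \<subseteq> \<tau>" using z \<tau> by auto
        then show ?thesis using g(5) \<tau> z by blast
      next
        case True
        show ?thesis
        proof (cases "\<zeta> - {s} = {}")
          case True
          then have "\<zeta> = {s}" using `s \<in> \<zeta>` by auto
          then show ?thesis using g(6) sd by auto
        next
          case False
          have sub: "\<zeta> - {s} \<subseteq> \<tau>" using z \<tau> by auto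
          then have "\<zeta> - {s} \<in> Kh" using g(5) \<tau> False by blast
          then have "\<zeta> - {s} \<in> act_star Kh A d" using sub \<tau> \<sigma> by (auto simp: ast)
          moreover have "\<zeta> = insert s (\<zeta> - {s})" using `s \<in> \<zeta>` by auto
          ultimately show ?thesis unfolding C_def by blast
        qed
      qed
    qed
  qed
  have KE': "(\<lambda>\<sigma>. (\<lambda>z. if z = d then s else z) ` \<sigma>) ` K = {\<rho>\<in>Kh \<union> C. \<rho> \<subseteq> A - {d}}"
    (is "?L = ?R")
  proof
    show "?L \<subseteq> ?R"
    proof
      fix \<rho> assume "\<rho> \<in> ?L"
      then obtain \<sigma> where \<sigma>: "\<sigma> \<in> K" "\<rho> = (\<lambda>z. if z = d then s else z) ` \<sigma>" by auto
      have \<sigma>': "\<sigma> \<in> Kh" "\<sigma> \<subseteq> A" using \<sigma> g(4) by auto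
      show "\<rho> \<in> ?R"
      proof (cases "d \<in> \<sigma>")
        case False
        then have "\<rho> = \<sigma>" using \<sigma> by (auto intro!: image_cong)
        then show ?thesis using \<sigma>' False by auto
      next
        case True
        have r: "\<rho> = insert s (\<sigma> - {d})" using \<sigma> True by auto
        show ?thesis
        proof (cases "\<sigma> - {d} = {}")
          case True
          then have "\<rho> = {s}" using r by auto
          then show ?thesis using g(6) sd by auto
        next
          case False
          then have "\<sigma> - {d} \<in> Kh" using g(5) \<sigma>' by blast
          then have "\<sigma> - {d} \<in> act_star Kh A d" using \<sigma>' `d \<in> \<sigma>` by (auto simp: ast)
          then have "\<rho> \<in> C" unfolding C_def using r by auto
          moreover have "\<rho> \<subseteq> A - {d}" using r \<sigma>' sd by auto
          ultimately show ?thesis by auto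
        qed
      qed
    qed
  next
    show "?R \<subseteq> ?L"
    proof
      fix \<rho> assume \<rho>: "\<rho> \<in> ?R"
      show "\<rho> \<in> ?L"
      proof (cases "\<rho> \<in> Kh")
        case True
        then have "\<rho> \<in> K" "d \<notin> \<rho>" using \<rho> g(4) by auto
        moreover then have "\<rho> = (\<lambda>z. if z = d then s else z) ` \<rho>" by (auto intro!: image_cong)
        ultimately show ?thesis by blast
      next
        case False
        then have "\<rho> \<in> C" using \<rho> by blast
        then obtain \<tau> where \<tau>: "\<rho> = insert s \<tau>" "\<tau> \<in> Kh" "\<tau> \<subseteq> A" and \<sigma>: "\<exists>\<sigma>\<in>Kh. d \<in> \<sigma> \<and> \<tau> \<subseteq> \<sigma>"
          unfolding C_def by (auto simp: ast)
        have dt: "d \<notin> \<tau>" using \<rho> \<tau> by auto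
        obtain \<sigma>0 where "\<sigma>0 \<in> Kh" "d \<in> \<sigma>0" "\<tau> \<subseteq> \<sigma>0" using \<sigma> by blast
        then have "insert d \<tau> \<in> Kh" using g(5)[of \<sigma>0 "insert d \<tau>"] by blast
        then have "insert d \<tau> \<in> K" using g(4) \<tau> sd by auto
        moreover have "(\<lambda>z. if z = d then s else z) ` (insert d \<tau>) = \<rho>"
          using dt \<tau> by (auto intro!: image_cong)
        ultimately show ?thesis by blast
      qed
    qed
  qed
  have sA': "\<forall>a\<in>A - {d}. {a} \<in> Kh \<union> C" using g(6) by blast
  have el: "\<forall>\<rho>\<in>Kh \<union> C. finite \<rho> \<and> \<rho> \<noteq> {}" using elC g(2,3) by blast
  show ?thesis unfolding C_def[symmetric] good_def
    using g(1) fC el KE' clC sA' by blast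
qed

lemma tinv_step:
  assumes V: "valid_tower ops" and i: "i < length ops" and I: "tinv ops i"
  shows "tinv ops (Suc i)"
proof (cases "ops!i")
  case (Incl \<sigma>)
  note st = step_Incl[OF i Incl]
  note vi = valid_Incl[OF V i Incl]
  show ?thesis unfolding tinv_good st(1,2,3)
    using good_incl[of "cK ops i" "cKhat ops i" "cAct ops i" \<sigma>] I vi unfolding tinv_good by blast
next
  case (Contr u v)
  note st = step_Contr[OF i Contr]
  note vc = valid_Contr[OF V i Contr]
  have G: "good (cK ops i) (cKhat ops i) (cAct ops i)" using I by (simp add: tinv_good)
  have uv: "u \<noteq> v" "u \<in> cAct ops i" "v \<in> cAct ops i" using vc goodD(4)[OF G] by auto
  have sd: "surv ops i u v \<noteq> dead ops i u v" "surv ops i u v \<in> cAct ops i" "dead ops i u v \<in> cAct ops i"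
    using surv_dead[where ops=ops and i=i and u=u and v=v] uv by auto
  show ?thesis unfolding tinv_good st(1,2,3,4)
    using good_contr[OF G sd] .
qed

lemma tinv: "valid_tower ops \<Longrightarrow> i \<le> length ops \<Longrightarrow> tinv ops i"
proof (induction i)
  case 0 show ?case by (rule inv0)
next
  case (Suc i) then show ?case by (intro tinv_step) auto
qed


lemma good_at: "valid_tower ops \<Longrightarrow> i \<le> length ops \<Longrightarrow> good (cK ops i) (cKhat ops i) (cAct ops i)"
  using tinv[of ops i] tinv_good[of ops i] by simp

lemma act_iff:
  assumes "valid_tower ops" "i \<le> length ops"
  shows "a \<in> cAct ops i \<longleftrightarrow> {a} \<in> cK ops i"
proof -
  note G = good_at[OF assms]
  have KE: "cK ops i = {\<rho>\<in>cKhat ops i. \<rho> \<subseteq> cAct ops i}" by (rule goodD(4)[OF G])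
  have "a \<in> cAct ops i \<Longrightarrow> {a} \<in> cKhat ops i" by (rule goodD(6)[OF G])
  then show ?thesis unfolding KE by auto
qed

lemma act_Kh:
  assumes "valid_tower ops" "i \<le> length ops" "a \<in> cAct ops i"
  shows "a \<in> \<Union>(cKhat ops i)"
proof -
  have "{a} \<in> cKhat ops i" by (rule goodD(6)[OF good_at[OF assms(1,2)] assms(3)])
  then show ?thesis by blast
qed

lemma cAct0: "cAct ops 0 = {}" by (simp add: cAct_def tstate_def)
lemma cK0: "cK ops 0 = {}" by (simp add: cK_def tstate_def)

lemma Greatest_Suc:
  "(GREATEST k::nat. k < Suc j \<and> P k) = (if P j then j else (GREATEST k. k < j \<and> P k))"
proof (cases "P j")
  case True
  then show ?thesis by (auto intro!: Greatest_equality)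
next
  case False
  then have "(\<lambda>k. k < Suc j \<and> P k) = (\<lambda>k. k < j \<and> P k)" by (auto simp: less_Suc_eq fun_eq_iff)
  then show ?thesis using False by simp
qed

lemma root_of_Suc:
  "root_of ops (Suc j) w = (if is_node ops j \<and> node_label ops j = w then j else root_of ops j w)"
  unfolding root_of_def by (rule Greatest_Suc)

lemma node_exists:
  assumes V: "valid_tower ops"
  shows "t \<le> length ops \<Longrightarrow> a \<in> cAct ops t \<Longrightarrow> \<exists>j<t. is_node ops j \<and> node_label ops j = a"
proof (induction t)
  case 0 then show ?case by (simp add: cAct0)
next
  case (Suc t)
  then have t: "t < length ops" by simp
  show ?case
  proof (cases "ops!t")
    case (Incl \<sigma>)
    note st = step_Incl[OF t Incl]
    show ?thesis
    proof (cases "a \<in> cAct ops t")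
      case True
      then obtain j where "j<t" "is_node ops j \<and> node_label ops j = a" using Suc.IH Suc.prems by auto
      then show ?thesis by (intro exI[of _ j]) auto
    next
      case False
      then have "card \<sigma> = 1" "a \<in> \<sigma>" using Suc.prems st(3) by (auto split: if_splits)
      then have "\<sigma> = {a}" by (auto simp: card_Suc_eq)
      then have "is_node ops t \<and> node_label ops t = a"
        using t Incl by (auto simp: is_node_def node_label_def)
      then show ?thesis by blast
    qed
  next
    case (Contr u v)
    note st = step_Contr[OF t Contr]
    then have "a \<in> cAct ops t" using Suc.prems by auto
    then obtain j where "j<t" "is_node ops j \<and> node_label ops j = a" using Suc.IH Suc.prems by auto
    then show ?thesis by (intro exI[of _ j]) auto
  qed
qed

lemma root_lt:
  assumes "valid_tower ops" "t \<le> length ops" "a \<in> cAct ops t"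
  shows "root_of ops t a < t" "is_node ops (root_of ops t a)" "node_label ops (root_of ops t a) = a"
proof -
  obtain j where j: "j < t" "is_node ops j" "node_label ops j = a" using node_exists[OF assms] by blast
  have "(\<lambda>k. k < t \<and> is_node ops k \<and> node_label ops k = a) (root_of ops t a)"
    unfolding root_of_def by (rule GreatestI_nat[where k=j and b=t]) (use j in auto)
  then show "root_of ops t a < t" "is_node ops (root_of ops t a)" "node_label ops (root_of ops t a) = a"
    by auto
qed

lemma in_subtree_le:
  assumes V: "valid_tower ops"
  shows "in_subtree ops z y \<Longrightarrow> y \<le> z"
proof (induction rule: in_subtree.induct)
  case (refl x) then show ?case by simp
next
  case (left x u v y)
  have "u \<in> cAct ops x" using valid_Contr[OF V left(1,2)] act_iff[OF V] left(1) by auto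
  then have "root_of ops x u < x" using root_lt[OF V] left(1) by auto
  then show ?case using left by simp
next
  case (right x u v y)
  have "v \<in> cAct ops x" using valid_Contr[OF V right(1,2)] act_iff[OF V] right(1) by auto
  then have "root_of ops x v < x" using root_lt[OF V] right(1) by auto
  then show ?case using right by simp
qed

lemma in_subtree_Contr:
  assumes "z < length ops" "ops!z = Contr u v"
  shows "in_subtree ops z y \<longleftrightarrow> y = z \<or> in_subtree ops (root_of ops z u) y \<or> in_subtree ops (root_of ops z v) y"
proof
  assume "in_subtree ops z y"
  then show "y = z \<or> in_subtree ops (root_of ops z u) y \<or> in_subtree ops (root_of ops z v) y"
    by (cases rule: in_subtree.cases) (use assms in auto)
next
  assume "y = z \<or> in_subtree ops (root_of ops z u) y \<or> in_subtree ops (root_of ops z v) y"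
  then show "in_subtree ops z y"
  proof (elim disjE)
    assume "y = z" then show ?thesis by (simp add: in_subtree.refl)
  next
    assume "in_subtree ops (root_of ops z u) y" then show ?thesis by (rule in_subtree.left[OF assms])
  next
    assume "in_subtree ops (root_of ops z v) y" then show ?thesis by (rule in_subtree.right[OF assms])
  qed
qed

lemma in_subtree_Incl:
  assumes "ops!z = Incl \<sigma>"
  shows "in_subtree ops z y \<longleftrightarrow> y = z"
proof
  assume "in_subtree ops z y"
  then show "y = z" by (cases rule: in_subtree.cases) (use assms in auto)
qed (simp add: in_subtree.refl)

lemma node_Incl:
  assumes "t < length ops" "ops!t = Incl \<sigma>"
  shows "is_node ops t \<longleftrightarrow> (\<exists>w. \<sigma> = {w})" "node_label ops t = the_elem \<sigma>"
  using assms by (auto simp: is_node_def node_label_def)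

lemma node_Contr:
  assumes "t < length ops" "ops!t = Contr u v"
  shows "is_node ops t" "node_label ops t = surv ops t u v"
  using assms by (auto simp: is_node_def node_label_def surv_def)


lemma Incl_vertex_fresh:
  assumes V: "valid_tower ops" and t: "t < length ops" and I: "ops!t = Incl {w0}"
  shows "w0 \<notin> cAct ops t"
proof
  assume "w0 \<in> cAct ops t"
  then have "w0 \<in> \<Union>(cKhat ops t)" using act_Kh[OF V] t by simp
  moreover have "w0 \<notin> \<Union>(cKhat ops t)" using valid_Incl[OF V t I] by blast
  ultimately show False by blast
qed

lemma root_Incl_other:
  assumes t: "t < length ops" and I: "ops!t = Incl \<sigma>" and ne: "\<sigma> \<noteq> {w}"
  shows "root_of ops (Suc t) w = root_of ops t w"
proof -
  have "\<not> (is_node ops t \<and> node_label ops t = w)" using node_Incl[OF t I] ne by auto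
  then show ?thesis unfolding root_of_Suc[of ops t w] by (rule if_not_P)
qed

lemma root_Incl_new:
  assumes t: "t < length ops" and I: "ops!t = Incl {w}"
  shows "root_of ops (Suc t) w = t"
proof -
  have "is_node ops t \<and> node_label ops t = w" using node_Incl[OF t I] by auto
  then show ?thesis unfolding root_of_Suc[of ops t w] by (rule if_P)
qed

lemma root_Contr_other:
  assumes t: "t < length ops" and C: "ops!t = Contr u v" and ne: "w \<noteq> surv ops t u v"
  shows "root_of ops (Suc t) w = root_of ops t w"
proof -
  have "\<not> (is_node ops t \<and> node_label ops t = w)" using node_Contr[OF t C] ne by auto
  then show ?thesis unfolding root_of_Suc[of ops t w] by (rule if_not_P)
qed

lemma root_Contr_surv:
  assumes t: "t < length ops" and C: "ops!t = Contr u v"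
  shows "root_of ops (Suc t) (surv ops t u v) = t"
proof -
  have "is_node ops t \<and> node_label ops t = surv ops t u v" using node_Contr[OF t C] by auto
  then show ?thesis unfolding root_of_Suc[of ops t "surv ops t u v"] by (rule if_P)
qed

lemma act_Incl:
  assumes t: "t < length ops" and I: "ops!t = Incl \<sigma>"
  shows "cAct ops (Suc t) = (if \<exists>w. \<sigma> = {w} then cAct ops t \<union> \<sigma> else cAct ops t)"
proof -
  have "card \<sigma> = 1 \<longleftrightarrow> (\<exists>w. \<sigma> = {w})" by (auto simp: card_Suc_eq)
  then show ?thesis using step_Incl(3)[OF t I] by simp
qed

lemma base_forest:
  assumes V: "valid_tower ops"
  shows "t \<le> length ops \<Longrightarrow> a \<in> cAct ops t \<Longrightarrow> w \<in> cAct ops t \<Longrightarrow>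
    in_subtree ops (root_of ops t w) (root_of ops t a) \<longleftrightarrow> a = w"
proof (induction t arbitrary: a w)
  case 0 then show ?case by (simp add: cAct0)
next
  case (Suc t)
  then have t: "t < length ops" by simp
  have lt: "\<And>b. b \<in> cAct ops t \<Longrightarrow> root_of ops t b < t" using root_lt(1)[OF V] t by simp
  show ?case
  proof (cases "ops!t")
    case (Incl \<sigma>)
    show ?thesis
    proof (cases "\<exists>w0. \<sigma> = {w0}")
      case False
      then have A: "cAct ops (Suc t) = cAct ops t" using act_Incl[OF t Incl] by simp
      have R: "\<And>b. root_of ops (Suc t) b = root_of ops t b" using root_Incl_other[OF t Incl] False by blast
      show ?thesis using Suc.IH[of a w] Suc.prems A R t by simp
    next
      case True
      then obtain w0 where w0: "\<sigma> = {w0}" by blast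
      have I: "ops!t = Incl {w0}" using Incl w0 by simp
      have fr: "w0 \<notin> cAct ops t" by (rule Incl_vertex_fresh[OF V t I])
      have A: "cAct ops (Suc t) = insert w0 (cAct ops t)" using act_Incl[OF t Incl] w0 by auto
      have Rn: "root_of ops (Suc t) w0 = t" by (rule root_Incl_new[OF t I])
      have Ro: "\<And>b. b \<noteq> w0 \<Longrightarrow> root_of ops (Suc t) b = root_of ops t b"
        using root_Incl_other[OF t I] by auto
      have ins: "\<And>y. in_subtree ops t y \<longleftrightarrow> y = t" by (rule in_subtree_Incl[OF I])
      show ?thesis
      proof (cases "a = w0")
        case True
        show ?thesis
        proof (cases "w = w0")
          case True then show ?thesis using `a = w0` by (simp add: in_subtree.refl)
        next
          case False
          then have "w \<in> cAct ops t" using Suc.prems A by auto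
          then have "root_of ops t w < t" using lt by simp
          then have "\<not> in_subtree ops (root_of ops t w) t" using in_subtree_le[OF V] by fastforce
          then show ?thesis using `a = w0` False Rn Ro by simp
        qed
      next
        case False
        then have a: "a \<in> cAct ops t" using Suc.prems A by auto
        show ?thesis
        proof (cases "w = w0")
          case True
          have "root_of ops t a < t" using lt a by simp
          then show ?thesis using True False Rn Ro ins by simp
        next
          case wF: False
          then have "w \<in> cAct ops t" using Suc.prems A by auto
          then show ?thesis using Suc.IH[of a w] a Ro False wF t by simp
        qed
      qed
    qed
  next
    case (Contr u v)
    note st = step_Contr[OF t Contr]
    define s where "s = surv ops t u v"
    define d where "d = dead ops t u v"
    have vc: "u \<noteq> v" "u \<in> cAct ops t" "v \<in> cAct ops t"
      using valid_Contr[OF V t Contr] act_iff[OF V] t by auto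
    have sd: "{s, d} = {u, v}" "s \<noteq> d" using surv_dead[where ops=ops and i=t and u=u and v=v] vc
      unfolding s_def d_def by auto
    have A: "cAct ops (Suc t) = cAct ops t - {d}" using st(3) unfolding d_def by simp
    have Rs: "root_of ops (Suc t) s = t" unfolding s_def by (rule root_Contr_surv[OF t Contr])
    have Ro: "\<And>b. b \<noteq> s \<Longrightarrow> root_of ops (Suc t) b = root_of ops t b"
      using root_Contr_other[OF t Contr] unfolding s_def by blast
    have a: "a \<in> cAct ops t" "a \<noteq> d" and w: "w \<in> cAct ops t" "w \<noteq> d" using Suc.prems A by auto
    show ?thesis
    proof (cases "w = s")
      case True
      show ?thesis
      proof (cases "a = s")
        case True then show ?thesis using `w = s` by (simp add: in_subtree.refl)
      next
        case False
        have "root_of ops t a < t" using lt a by simp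
        moreover have "\<not> in_subtree ops (root_of ops t u) (root_of ops t a)"
          using Suc.IH[of a u] a vc t False sd by auto
        moreover have "\<not> in_subtree ops (root_of ops t v) (root_of ops t a)"
          using Suc.IH[of a v] a vc t False sd by auto
        ultimately show ?thesis using in_subtree_Contr[OF t Contr] True Rs Ro False by auto
      qed
    next
      case False
      show ?thesis
      proof (cases "a = s")
        case True
        have "root_of ops t w < t" using lt w by simp
        then have "\<not> in_subtree ops (root_of ops t w) t" using in_subtree_le[OF V] by fastforce
        then show ?thesis using True False Rs Ro by simp
      next
        case aF: False
        then show ?thesis using Suc.IH[of a w] a w Ro False t by simp
      qed
    qed
  qed
qed


fun Phi :: "'v tower_op list \<Rightarrow> nat \<Rightarrow> nat \<Rightarrow> 'v \<Rightarrow> 'v" where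
  "Phi ops t 0 = id"
| "Phi ops t (Suc j) = (if t \<le> j then phi_at ops j \<circ> Phi ops t j else id)"

lemma Phi_same: "Phi ops t t = id"
  by (cases t) auto

lemma Phi_Suc: "t \<le> j \<Longrightarrow> Phi ops t (Suc j) = phi_at ops j \<circ> Phi ops t j"
  by simp

lemma Phi_maps:
  assumes V: "valid_tower ops" and tj: "t \<le> j" and jl: "j \<le> length ops" and a: "a \<in> cAct ops t"
  shows "Phi ops t j a \<in> cAct ops j"
  using tj jl
proof (induction j rule: dec_induct)
  case base then show ?case using a by (simp add: Phi_same)
next
  case (step n)
  then have n: "n < length ops" by simp
  have IH: "Phi ops t n a \<in> cAct ops n" using step by simp
  show ?case
  proof (cases "ops!n")
    case (Incl \<sigma>)
    then show ?thesis using IH step_Incl[OF n Incl] step(1) by (auto simp: Phi_Suc)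
  next
    case (Contr u v)
    note st = step_Contr[OF n Contr]
    have vc: "u \<noteq> v" "u \<in> cAct ops n" "v \<in> cAct ops n"
      using valid_Contr[OF V n Contr] act_iff[OF V] n by auto
    have sd: "{surv ops n u v, dead ops n u v} = {u, v}" "surv ops n u v \<noteq> dead ops n u v"
      using surv_dead[where ops=ops and i=n and u=u and v=v] vc by auto
    have "surv ops n u v \<in> cAct ops n" using surv_dead(1)[where ops=ops and i=n and u=u and v=v] vc by auto
    then show ?thesis using IH st(3,4) step(1) sd by (auto simp: Phi_Suc)
  qed
qed

lemma main_forest:
  assumes V: "valid_tower ops" and tj: "t \<le> j" and jl: "j \<le> length ops" and a: "a \<in> cAct ops t"
  shows "\<forall>w \<in> cAct ops j. in_subtree ops (root_of ops j w) (root_of ops t a) \<longleftrightarrow> Phi ops t j a = w"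
  using tj jl
proof (induction j rule: dec_induct)
  case base then show ?case using base_forest[OF V _ a] by (simp add: Phi_same)
next
  case (step n)
  then have n: "n < length ops" by simp
  have IH: "\<And>w. w \<in> cAct ops n \<Longrightarrow> in_subtree ops (root_of ops n w) (root_of ops t a) \<longleftrightarrow> Phi ops t n a = w"
    using step by simp
  have rlt: "root_of ops t a < t" using root_lt(1)[OF V _ a] step by simp
  have PA: "Phi ops t n a \<in> cAct ops n" using Phi_maps[OF V step(1) _ a] n by simp
  show ?case
  proof
    fix w assume w: "w \<in> cAct ops (Suc n)"
    show "in_subtree ops (root_of ops (Suc n) w) (root_of ops t a) \<longleftrightarrow> Phi ops t (Suc n) a = w"
    proof (cases "ops!n")
      case (Incl \<sigma>)
      have P: "Phi ops t (Suc n) a = Phi ops t n a" using step_Incl(4)[OF n Incl] step(1) by (simp add: Phi_Suc)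
      show ?thesis
      proof (cases "\<sigma> = {w}")
        case True
        have I: "ops!n = Incl {w}" using Incl True by simp
        have fr: "w \<notin> cAct ops n" by (rule Incl_vertex_fresh[OF V n I])
        have "root_of ops (Suc n) w = n" by (rule root_Incl_new[OF n I])
        moreover have "\<not> in_subtree ops n (root_of ops t a)" using in_subtree_Incl[OF I] rlt step(1) by simp
        moreover have "Phi ops t n a \<noteq> w" using PA fr by blast
        ultimately show ?thesis using P by simp
      next
        case False
        have R: "root_of ops (Suc n) w = root_of ops n w" by (rule root_Incl_other[OF n Incl False])
        have "w \<in> cAct ops n" using w act_Incl[OF n Incl] False by (auto split: if_splits)
        then show ?thesis using IH R P by simp
      qed
    next
      case (Contr u v)
      note st = step_Contr[OF n Contr]
      define s where "s = surv ops n u v"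
      define d where "d = dead ops n u v"
      have vc: "u \<noteq> v" "u \<in> cAct ops n" "v \<in> cAct ops n"
        using valid_Contr[OF V n Contr] act_iff[OF V] n by auto
      have sd: "{s, d} = {u, v}" "s \<noteq> d" using surv_dead[where ops=ops and i=n and u=u and v=v] vc
        unfolding s_def d_def by auto
      have A: "cAct ops (Suc n) = cAct ops n - {d}" using st(3) unfolding d_def by simp
      have P: "Phi ops t (Suc n) a = (if Phi ops t n a = d then s else Phi ops t n a)"
        using st(4) step(1) unfolding s_def d_def by (simp add: Phi_Suc)
      have wA: "w \<in> cAct ops n" "w \<noteq> d" using w A by auto
      show ?thesis
      proof (cases "w = s")
        case True
        have Rs: "root_of ops (Suc n) w = n" using True root_Contr_surv[OF n Contr] unfolding s_def by simp
        have "in_subtree ops n (root_of ops t a) \<longleftrightarrow>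
          in_subtree ops (root_of ops n u) (root_of ops t a) \<or> in_subtree ops (root_of ops n v) (root_of ops t a)"
          using in_subtree_Contr[OF n Contr] rlt step(1) by auto
        also have "\<dots> \<longleftrightarrow> Phi ops t n a = u \<or> Phi ops t n a = v" using IH vc by simp
        also have "\<dots> \<longleftrightarrow> Phi ops t (Suc n) a = w" using P True sd by auto
        finally show ?thesis using Rs by simp
      next
        case False
        have R: "root_of ops (Suc n) w = root_of ops n w"
          using root_Contr_other[OF n Contr] False unfolding s_def by simp
        have "Phi ops t (Suc n) a = w \<longleftrightarrow> Phi ops t n a = w" using P False wA by auto
        then show ?thesis using IH[OF wA(1)] R by simp
      qed
    qed
  qed
qed

lemma K_repr:
  "j \<le> length ops \<Longrightarrow> \<rho> \<in> cK ops j \<Longrightarrow> \<exists>i \<sigma>. i < j \<and> ops!i = Incl \<sigma> \<and> \<rho> = Phi ops (Suc i) j ` \<sigma>"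
proof (induction j arbitrary: \<rho>)
  case 0 then show ?case by (simp add: cK0)
next
  case (Suc j)
  then have n: "j < length ops" by simp
  show ?case
  proof (cases "ops!j")
    case (Incl \<sigma>)
    note st = step_Incl[OF n Incl]
    show ?thesis
    proof (cases "\<rho> = \<sigma>")
      case True
      then show ?thesis using Incl by (intro exI[of _ j] exI[of _ \<sigma>]) (simp add: Phi_same)
    next
      case False
      then have "\<rho> \<in> cK ops j" using Suc.prems st(1) by simp
      then have "\<exists>i \<sigma>. i < j \<and> ops!i = Incl \<sigma> \<and> \<rho> = Phi ops (Suc i) j ` \<sigma>" using Suc.IH n by simp
      then obtain i \<sigma>' where i: "i < j" "ops!i = Incl \<sigma>'" "\<rho> = Phi ops (Suc i) j ` \<sigma>'" by blast
      have "Phi ops (Suc i) (Suc j) = Phi ops (Suc i) j" using i(1) st(4) by (simp add: Phi_Suc)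
      then show ?thesis using i by (intro exI[of _ i] exI[of _ \<sigma>']) simp
    qed
  next
    case (Contr u v)
    note st = step_Contr[OF n Contr]
    obtain \<rho>0 where r0: "\<rho>0 \<in> cK ops j" "\<rho> = phi_at ops j ` \<rho>0" using Suc.prems st(1) by auto
    then have "\<exists>i \<sigma>. i < j \<and> ops!i = Incl \<sigma> \<and> \<rho>0 = Phi ops (Suc i) j ` \<sigma>" using Suc.IH n by simp
    then obtain i \<sigma>' where i: "i < j" "ops!i = Incl \<sigma>'" "\<rho>0 = Phi ops (Suc i) j ` \<sigma>'" by blast
    have "Phi ops (Suc i) (Suc j) = phi_at ops j \<circ> Phi ops (Suc i) j" using i(1) by (simp add: Phi_Suc)
    then have "\<rho> = Phi ops (Suc i) (Suc j) ` \<sigma>'" using r0 i by (simp add: image_comp)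
    then show ?thesis using i by (intro exI[of _ i] exI[of _ \<sigma>']) simp
  qed
qed


lemma good_finK: "good K Kh A \<Longrightarrow> finite K"
  using goodD(1,4) by (metis (no_types, lifting) finite_subset mem_Collect_eq subsetI)

lemma cone_bound:
  assumes G: "good K Kh A" and sd: "s \<noteq> d" "s \<in> A" "d \<in> A"
  shows "card ((Kh \<union> {insert s \<tau> |\<tau>. \<tau> \<in> act_star Kh A d}) - Kh) \<le> 2 * card {\<rho>\<in>K. d\<in>\<rho> \<and> s\<notin>\<rho>}"
proof -
  note g = goodD[OF G]
  define D where "D = {\<rho>\<in>K. d\<in>\<rho> \<and> s\<notin>\<rho>}"
  have fD: "finite D" using good_finK[OF G] unfolding D_def by simp
  have sub: "(Kh \<union> {insert s \<tau> |\<tau>. \<tau> \<in> act_star Kh A d}) - Kh \<subseteq> insert s ` D \<union> (\<lambda>\<rho>. insert s (\<rho> - {d})) ` D"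
  proof
    fix c assume c: "c \<in> (Kh \<union> {insert s \<tau> |\<tau>. \<tau> \<in> act_star Kh A d}) - Kh"
    then obtain \<tau> where \<tau>: "c = insert s \<tau>" "\<tau> \<in> Kh" "\<tau> \<subseteq> A" and \<sigma>: "\<exists>\<sigma>\<in>Kh. d \<in> \<sigma> \<and> \<tau> \<subseteq> \<sigma>"
      and cn: "c \<notin> Kh" by (auto simp: act_star_def)
    have sn: "s \<notin> \<tau>" using \<tau> cn by (metis insert_absorb)
    have tK: "\<tau> \<in> K" using \<tau> g(4) by simp
    show "c \<in> insert s ` D \<union> (\<lambda>\<rho>. insert s (\<rho> - {d})) ` D"
    proof (cases "d \<in> \<tau>")
      case True
      then have "\<tau> \<in> D" using tK sn unfolding D_def by simp
      then show ?thesis using \<tau>(1) by blast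
    next
      case False
      obtain \<sigma>0 where s0: "\<sigma>0 \<in> Kh" "d \<in> \<sigma>0" "\<tau> \<subseteq> \<sigma>0" using \<sigma> by blast
      have "insert d \<tau> \<in> Kh" using g(5)[of \<sigma>0 "insert d \<tau>"] s0 by blast
      then have "insert d \<tau> \<in> K" using g(4) \<tau> sd by simp
      then have "insert d \<tau> \<in> D" using sn sd unfolding D_def by simp
      moreover have "c = insert s (insert d \<tau> - {d})" using False \<tau>(1) by simp
      ultimately show ?thesis by blast
    qed
  qed
  have "card ((Kh \<union> {insert s \<tau> |\<tau>. \<tau> \<in> act_star Kh A d}) - Kh) \<le> card (insert s ` D \<union> (\<lambda>\<rho>. insert s (\<rho> - {d})) ` D)"
    using sub fD by (intro card_mono) auto
  also have "\<dots> \<le> card (insert s ` D) + card ((\<lambda>\<rho>. insert s (\<rho> - {d})) ` D)" by (rule card_Un_le)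
  also have "\<dots> \<le> card D + card D" using card_image_le[OF fD] by (intro add_mono) auto
  finally show ?thesis unfolding D_def by simp
qed

lemma star_card:
  assumes G: "good K Kh A" and w: "w \<in> A"
  shows "card (act_star Kh A w) + 1 = 2 * card {\<rho>\<in>K. w\<in>\<rho>}"
proof -
  note g = goodD[OF G]
  have fK: "finite K" by (rule good_finK[OF G])
  define S1 where "S1 = {\<rho>\<in>K. w\<in>\<rho>}"
  define S2 where "S2 = {\<tau>\<in>K. w\<notin>\<tau> \<and> insert w \<tau> \<in> K}"
  have f1: "finite S1" and f2: "finite S2" using fK unfolding S1_def S2_def by auto
  have eq: "act_star Kh A w = S1 \<union> S2"
  proof
    show "act_star Kh A w \<subseteq> S1 \<union> S2"
    proof
      fix \<tau> assume "\<tau> \<in> act_star Kh A w"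
      then have \<tau>: "\<tau> \<in> Kh" "\<tau> \<subseteq> A" and \<sigma>: "\<exists>\<sigma>\<in>Kh. w \<in> \<sigma> \<and> \<tau> \<subseteq> \<sigma>" by (auto simp: act_star_def)
      have tK: "\<tau> \<in> K" using \<tau> g(4) by simp
      show "\<tau> \<in> S1 \<union> S2"
      proof (cases "w \<in> \<tau>")
        case True then show ?thesis using tK unfolding S1_def by simp
      next
        case False
        obtain \<sigma>0 where s0: "\<sigma>0 \<in> Kh" "w \<in> \<sigma>0" "\<tau> \<subseteq> \<sigma>0" using \<sigma> by blast
        have "insert w \<tau> \<in> Kh" using g(5)[of \<sigma>0 "insert w \<tau>"] s0 by blast
        then have "insert w \<tau> \<in> K" using g(4) \<tau> w by simp
        then show ?thesis using tK False unfolding S2_def by simp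
      qed
    qed
  next
    show "S1 \<union> S2 \<subseteq> act_star Kh A w"
    proof
      fix \<tau> assume "\<tau> \<in> S1 \<union> S2"
      then have tK: "\<tau> \<in> K" and ex: "w \<in> \<tau> \<or> insert w \<tau> \<in> K" unfolding S1_def S2_def by auto
      have \<tau>: "\<tau> \<in> Kh" "\<tau> \<subseteq> A" using tK g(4) by auto
      have "\<exists>\<sigma>\<in>Kh. w \<in> \<sigma> \<and> \<tau> \<subseteq> \<sigma>"
      proof (cases "w \<in> \<tau>")
        case True then show ?thesis using \<tau> by blast
      next
        case False
        then have "insert w \<tau> \<in> Kh" using ex g(4) by auto
        then show ?thesis by blast
      qed
      then show "\<tau> \<in> act_star Kh A w" using \<tau> by (simp add: act_star_def)
    qed
  qed
  have disj: "S1 \<inter> S2 = {}" unfolding S1_def S2_def by auto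
  have bij: "bij_betw (insert w) S2 (S1 - {{w}})"
  proof (rule bij_betw_imageI)
    show "inj_on (insert w) S2"
    proof
      fix a b assume "a \<in> S2" "b \<in> S2" "insert w a = insert w b"
      then show "a = b" unfolding S2_def by (metis Diff_insert_absorb mem_Collect_eq)
    qed
  next
    show "insert w ` S2 = S1 - {{w}}"
    proof
      show "insert w ` S2 \<subseteq> S1 - {{w}}"
      proof
        fix r assume "r \<in> insert w ` S2"
        then obtain \<tau> where t: "\<tau> \<in> S2" "r = insert w \<tau>" by blast
        then have "\<tau> \<in> Kh" using g(4) unfolding S2_def by auto
        then have "\<tau> \<noteq> {}" using g(3) by blast
        then have "r \<noteq> {w}" using t unfolding S2_def by auto
        then show "r \<in> S1 - {{w}}" using t unfolding S1_def S2_def by auto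
      qed
    next
      show "S1 - {{w}} \<subseteq> insert w ` S2"
      proof
        fix r assume r: "r \<in> S1 - {{w}}"
        then have rK: "r \<in> K" "w \<in> r" "r \<noteq> {w}" unfolding S1_def by auto
        have rA: "r \<in> Kh" "r \<subseteq> A" using rK g(4) by auto
        have ne: "r - {w} \<noteq> {}" using rK by auto
        have "r - {w} \<in> Kh" using g(5)[of r "r - {w}"] rA ne by blast
        then have "r - {w} \<in> K" using g(4) rA by auto
        moreover have "insert w (r - {w}) = r" using rK by auto
        ultimately have "r - {w} \<in> S2" using rK unfolding S2_def by auto
        then show "r \<in> insert w ` S2" using `insert w (r - {w}) = r` by (metis image_eqI)
      qed
    qed
  qed
  have wS1: "{w} \<in> S1" using g(6)[OF w] g(4) w unfolding S1_def by auto
  have "card S2 = card (S1 - {{w}})" using bij_betw_same_card[OF bij] .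
  also have "\<dots> = card S1 - 1" using wS1 f1 by simp
  finally have c2: "card S2 = card S1 - 1" .
  have "card S1 \<ge> 1" using wS1 f1 by (metis One_nat_def Suc_leI card_gt_0_iff empty_iff)
  then show ?thesis unfolding eq card_Un_disjoint[OF f1 f2 disj] c2 unfolding S1_def[symmetric] by simp
qed

lemma split_card:
  assumes "finite K"
  shows "card {\<rho>\<in>K. w\<in>\<rho>} = card {\<rho>\<in>K. w\<in>\<rho> \<and> w'\<notin>\<rho>} + card {\<rho>\<in>K. w\<in>\<rho> \<and> w'\<in>\<rho>}"
proof -
  have "{\<rho>\<in>K. w\<in>\<rho>} = {\<rho>\<in>K. w\<in>\<rho> \<and> w'\<notin>\<rho>} \<union> {\<rho>\<in>K. w\<in>\<rho> \<and> w'\<in>\<rho>}" by auto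
  then show ?thesis using assms by (simp add: card_Un_disjoint disjoint_iff)
qed

lemma D_compare:
  assumes G: "good K Kh A" and sd: "s \<in> A" "d \<in> A"
    and le: "card (act_star Kh A d) \<le> card (act_star Kh A s)"
  shows "card {\<rho>\<in>K. d\<in>\<rho> \<and> s\<notin>\<rho>} \<le> card {\<rho>\<in>K. s\<in>\<rho> \<and> d\<notin>\<rho>}"
proof -
  have fK: "finite K" by (rule good_finK[OF G])
  have "card {\<rho>\<in>K. d\<in>\<rho>} \<le> card {\<rho>\<in>K. s\<in>\<rho>}"
    using star_card[OF G sd(1)] star_card[OF G sd(2)] le by linarith
  moreover have "card {\<rho>\<in>K. d\<in>\<rho> \<and> s\<in>\<rho>} = card {\<rho>\<in>K. s\<in>\<rho> \<and> d\<in>\<rho>}"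
    by (metis (no_types, lifting) conj_commute)
  ultimately show ?thesis using split_card[OF fK, of d s] split_card[OF fK, of s d] by linarith
qed

lemma surv_le:
  "card (act_star (cKhat ops i) (cAct ops i) (dead ops i u v)) \<le> card (act_star (cKhat ops i) (cAct ops i) (surv ops i u v))"
  by (auto simp: dead_def surv_def survivor_def)


lemma E_fin: "finite (E_set ops y)"
  unfolding E_set_def by (rule finite_subset[of _ "{..<length ops}"]) auto

lemma D_le_E:
  assumes V: "valid_tower ops" and x: "x \<le> length ops"
    and w: "w \<in> cAct ops x" and w': "w' \<in> cAct ops x"
  shows "card {\<rho>\<in>cK ops x. w\<in>\<rho> \<and> w'\<notin>\<rho>} \<le> card (E_set ops (root_of ops x w) - E_set ops (root_of ops x w'))"
proof -
  define D where "D = {\<rho>\<in>cK ops x. w\<in>\<rho> \<and> w'\<notin>\<rho>}"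
  define P where "P = (\<lambda>\<rho> i. i < x \<and> (\<exists>\<sigma>. ops!i = Incl \<sigma> \<and> \<rho> = Phi ops (Suc i) x ` \<sigma>))"
  define idx where "idx = (\<lambda>\<rho>. SOME i. P \<rho> i)"
  have Pidx: "\<And>\<rho>. \<rho> \<in> D \<Longrightarrow> P \<rho> (idx \<rho>)"
  proof -
    fix \<rho> assume "\<rho> \<in> D"
    then have "\<rho> \<in> cK ops x" unfolding D_def by simp
    then have "\<exists>i. P \<rho> i" using K_repr[OF x] unfolding P_def by blast
    then show "P \<rho> (idx \<rho>)" unfolding idx_def by (rule someI_ex)
  qed
  have inj: "inj_on idx D"
  proof
    fix \<rho> \<rho>' assume r: "\<rho> \<in> D" "\<rho>' \<in> D" "idx \<rho> = idx \<rho>'"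
    obtain \<sigma> where s: "ops!(idx \<rho>) = Incl \<sigma>" "\<rho> = Phi ops (Suc (idx \<rho>)) x ` \<sigma>"
      using Pidx[OF r(1)] unfolding P_def by blast
    obtain \<sigma>' where s': "ops!(idx \<rho>') = Incl \<sigma>'" "\<rho>' = Phi ops (Suc (idx \<rho>')) x ` \<sigma>'"
      using Pidx[OF r(2)] unfolding P_def by blast
    show "\<rho> = \<rho>'" using s s' r(3) by simp
  qed
  have img: "idx ` D \<subseteq> E_set ops (root_of ops x w) - E_set ops (root_of ops x w')"
  proof
    fix i assume "i \<in> idx ` D"
    then obtain \<rho> where r: "\<rho> \<in> D" "i = idx \<rho>" by blast
    obtain \<sigma> where i: "i < x" "ops!i = Incl \<sigma>" "\<rho> = Phi ops (Suc i) x ` \<sigma>"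
      using Pidx[OF r(1)] r(2) unfolding P_def by blast
    have il: "i < length ops" using i x by simp
    have "\<sigma> \<in> cK ops (Suc i)" using step_Incl(1)[OF il i(2)] by simp
    then have sA: "\<sigma> \<subseteq> cAct ops (Suc i)" using goodD(4)[OF good_at[OF V, of "Suc i"]] il by auto
    have MF: "\<And>a z. a \<in> \<sigma> \<Longrightarrow> z \<in> cAct ops x \<Longrightarrow>
        in_subtree ops (root_of ops x z) (root_of ops (Suc i) a) \<longleftrightarrow> Phi ops (Suc i) x a = z"
  proof -
      fix a z assume az: "a \<in> \<sigma>" "z \<in> cAct ops x"
      have "Suc i \<le> x" using i(1) by simp
      moreover have "a \<in> cAct ops (Suc i)" using sA az(1) by blast
      ultimately have "\<forall>w \<in> cAct ops x. in_subtree ops (root_of ops x w) (root_of ops (Suc i) a) \<longleftrightarrow> Phi ops (Suc i) x a = w"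
        by (rule main_forest[OF V _ x])
      then show "in_subtree ops (root_of ops x z) (root_of ops (Suc i) a) \<longleftrightarrow> Phi ops (Suc i) x a = z"
        using az(2) by blast
    qed
    have "w \<in> \<rho>" "w' \<notin> \<rho>" using r(1) unfolding D_def by auto
    then obtain a where a: "a \<in> \<sigma>" "Phi ops (Suc i) x a = w" using i(3) by blast
    have "i \<in> E_set ops (root_of ops x w)"
      unfolding E_set_def using il i(2) a MF[OF a(1) w] by blast
    moreover have "i \<notin> E_set ops (root_of ops x w')"
    proof
      assume "i \<in> E_set ops (root_of ops x w')"
      then obtain b where b: "b \<in> \<sigma>" "in_subtree ops (root_of ops x w') (root_of ops (Suc i) b)"
        unfolding E_set_def using i(2) by auto
      then have "Phi ops (Suc i) x b = w'" using MF[OF b(1) w'] by simp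
      then have "w' \<in> \<rho>" using i(3) b(1) by blast
      then show False using `w' \<notin> \<rho>` by simp
    qed
    ultimately show "i \<in> E_set ops (root_of ops x w) - E_set ops (root_of ops x w')" by simp
  qed
  have "card D \<le> card (E_set ops (root_of ops x w) - E_set ops (root_of ops x w'))"
    by (rule card_inj_on_le[OF inj img]) (simp add: E_fin)
  then show ?thesis unfolding D_def .
qed

theorem lemma8:
  fixes ops :: "'v tower_op list" and x y1 y2 :: nat and u v :: 'v
  assumes "valid_tower ops"
    and "x < length ops" and "ops ! x = Contr u v"
    and "(y1 = root_of ops x u \<and> y2 = root_of ops x v) \<or>
         (y1 = root_of ops x v \<and> y2 = root_of ops x u)"
  shows "cost ops x \<le> 2 * card (E_set ops y1 - E_set ops y2)"
proof -
  note V = assms(1) and xl = assms(2) and C = assms(3)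
  define K where "K = cK ops x"
  define Kh where "Kh = cKhat ops x"
  define A where "A = cAct ops x"
  define s where "s = surv ops x u v"
  define d where "d = dead ops x u v"
  have G: "good K Kh A" unfolding K_def Kh_def A_def using good_at[OF V] xl by simp
  have vc: "u \<noteq> v" "u \<in> A" "v \<in> A"
    using valid_Contr[OF V xl C] act_iff[OF V] xl unfolding A_def by auto
  have sd: "s \<in> {u, v}" "d \<in> {u, v}" "s \<noteq> d"
    using surv_dead[where ops=ops and i=x and u=u and v=v] vc unfolding s_def d_def by auto
  have sA: "s \<in> A" "d \<in> A" using sd vc by auto
  have cost: "cost ops x = card ((Kh \<union> {insert s \<tau> |\<tau>. \<tau> \<in> act_star Kh A d}) - Kh)"
    unfolding cost_def step_Contr(2)[OF xl C] Kh_def A_def s_def d_def ..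
  have c1: "cost ops x \<le> 2 * card {\<rho>\<in>K. d\<in>\<rho> \<and> s\<notin>\<rho>}"
    unfolding cost by (rule cone_bound[OF G sd(3) sA])
  have c2: "card {\<rho>\<in>K. d\<in>\<rho> \<and> s\<notin>\<rho>} \<le> card {\<rho>\<in>K. s\<in>\<rho> \<and> d\<notin>\<rho>}"
    using D_compare[OF G sA] surv_le[of ops x u v] unfolding Kh_def A_def s_def d_def by blast
  have both: "cost ops x \<le> 2 * card {\<rho>\<in>K. u\<in>\<rho> \<and> v\<notin>\<rho>} \<and> cost ops x \<le> 2 * card {\<rho>\<in>K. v\<in>\<rho> \<and> u\<notin>\<rho>}"
  proof (cases "s = v")
    case True
    then have "d = u" using sd by auto
    then have "cost ops x \<le> 2 * card {\<rho>\<in>K. u\<in>\<rho> \<and> v\<notin>\<rho>}"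
      "card {\<rho>\<in>K. u\<in>\<rho> \<and> v\<notin>\<rho>} \<le> card {\<rho>\<in>K. v\<in>\<rho> \<and> u\<notin>\<rho>}"
      using c1 c2 True by simp_all
    then show ?thesis by linarith
  next
    case False
    then have "s = u" "d = v" using sd by auto
    then have "cost ops x \<le> 2 * card {\<rho>\<in>K. v\<in>\<rho> \<and> u\<notin>\<rho>}"
      "card {\<rho>\<in>K. v\<in>\<rho> \<and> u\<notin>\<rho>} \<le> card {\<rho>\<in>K. u\<in>\<rho> \<and> v\<notin>\<rho>}"
      using c1 c2 by simp_all
    then show ?thesis by linarith
  qed
  have e1: "card {\<rho>\<in>K. u\<in>\<rho> \<and> v\<notin>\<rho>} \<le> card (E_set ops (root_of ops x u) - E_set ops (root_of ops x v))"
    unfolding K_def using D_le_E[OF V _ ] xl vc unfolding A_def by simp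
  have e2: "card {\<rho>\<in>K. v\<in>\<rho> \<and> u\<notin>\<rho>} \<le> card (E_set ops (root_of ops x v) - E_set ops (root_of ops x u))"
    unfolding K_def using D_le_E[OF V _ ] xl vc unfolding A_def by simp
  show ?thesis using assms(4) both e1 e2 by auto
qed

end
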